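(* A frame $L$ is subfit if and only if every exact filter of $L$ is regular, i.e. $\mathsf{Ex}(L)\subseteq\mathsf R(L)$.
   Context: A frame is a complete lattice $L$ with $(\bigvee A)\wedge b=\bigvee_{a\in A}(a\wedge b)$. $L$ is subfit if for all $a,b$: whenever ($\forall c$, $a\vee c=1\Rightarrow b\vee c=1$) then $a\le b$. A filter is a nonempty up-closed subset closed under finite meets. A meet $\bigwedge M$ is exact if $(\bigwedge M)\vee b=\bigwedge_{a\in M}(a\vee b)$ for all $b$; an exact filter contains every exact meet of its subsets; $\mathsf{Ex}(L)$ is the set of exact filters. A filter is regular if it is of the form $\{x\in L\mid\forall b\in G,\ b\vee x=1\}$ for some filter $G$; $\mathsf R(L)$ is the set of regular filters. *)

theory Defs
  imports Main
begin

class frame = complete_lattice +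
  assumes frame_distrib: "inf (Sup A) b = Sup ((\<lambda>a. inf a b) ` A)"

definition subfit :: "'a::frame itself \<Rightarrow> bool" where
  "subfit _ \<longleftrightarrow> (\<forall>a b::'a. (\<forall>c. sup a c = top \<longrightarrow> sup b c = top) \<longrightarrow> a \<le> b)"

definition lfilter :: "'a::frame set \<Rightarrow> bool" where
  "lfilter F \<longleftrightarrow> F \<noteq> {} \<and> (\<forall>x y. x \<in> F \<longrightarrow> x \<le> y \<longrightarrow> y \<in> F)
                 \<and> (\<forall>x y. x \<in> F \<longrightarrow> y \<in> F \<longrightarrow> inf x y \<in> F)"

definition exact_meet :: "'a::frame set \<Rightarrow> bool" where
  "exact_meet M \<longleftrightarrow> (\<forall>b. sup (Inf M) b = Inf ((\<lambda>a. sup a b) ` M))"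

definition exact_filter :: "'a::frame set \<Rightarrow> bool" where
  "exact_filter F \<longleftrightarrow> lfilter F \<and> (\<forall>M. M \<subseteq> F \<longrightarrow> exact_meet M \<longrightarrow> Inf M \<in> F)"

definition Ex_filters :: "'a::frame set set" where
  "Ex_filters = {F. exact_filter F}"

definition regular_filter :: "'a::frame set \<Rightarrow> bool" where
  "regular_filter F \<longleftrightarrow> lfilter F \<and>
     (\<exists>G. lfilter G \<and> F = {x. \<forall>b\<in>G. sup b x = top})"

definition R_filters :: "'a::frame set set" where
  "R_filters = {F. regular_filter F}"

end

theory Submission
  imports Defs
begin

lemma frame_inf_sup: "inf (sup a1 a2) (b::'a::frame) = sup (inf a1 b) (inf a2 b)"
  using frame_distrib[of "{a1,a2}" b] by simp

lemma frame_sup_inf: "sup (x::'a::frame) (inf y z) = inf (sup x y) (sup x z)"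
proof -
  have "inf (sup x y) (sup x z) = sup (inf x (sup x y)) (inf z (sup x y))"
    by (metis frame_inf_sup inf_commute)
  also have "\<dots> = sup x (inf z (sup x y))" by (simp add: inf_absorb1)
  also have "inf z (sup x y) = sup (inf x z) (inf y z)"
    by (metis frame_inf_sup inf_commute)
  also have "sup x (sup (inf x z) (inf y z)) = sup x (inf y z)"
    by (metis inf_sup_absorb sup_assoc inf_commute sup_commute sup_inf_absorb)
  finally show ?thesis by simp
qed

lemma forward:
  fixes F :: "'a::frame set"
  assumes sf: "subfit TYPE('a)" and ex: "exact_filter F"
  shows "regular_filter F"
proof -
  have lf: "lfilter F" using ex by (simp add: exact_filter_def)
  define G where "G = {c. \<forall>y\<in>F. sup y c = top}"
  have up: "\<And>x y. x \<in> F \<Longrightarrow> x \<le> y \<Longrightarrow> y \<in> F" using lf by (simp add: lfilter_def)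
  have lG: "lfilter G"
    unfolding lfilter_def G_def
  proof (intro conjI allI impI)
    show "{c. \<forall>y\<in>F. sup y c = top} \<noteq> {}" using sup_top_right by blast
    show "\<And>x y. x \<in> {c. \<forall>y\<in>F. sup y c = top} \<Longrightarrow> x \<le> y \<Longrightarrow> y \<in> {c. \<forall>y\<in>F. sup y c = top}"
      by (auto simp: top_unique) (metis sup.mono order_refl top_unique)
    show "\<And>x y. x \<in> {c. \<forall>y\<in>F. sup y c = top} \<Longrightarrow> y \<in> {c. \<forall>y\<in>F. sup y c = top} \<Longrightarrow> inf x y \<in> {c. \<forall>y\<in>F. sup y c = top}"
      by (auto simp: frame_sup_inf)
  qed
  have "F = {x. \<forall>b\<in>G. sup b x = top}"
  proof
    show "F \<subseteq> {x. \<forall>b\<in>G. sup b x = top}" by (auto simp: G_def sup_commute)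
  next
    show "{x. \<forall>b\<in>G. sup b x = top} \<subseteq> F"
    proof
      fix x assume "x \<in> {x. \<forall>b\<in>G. sup b x = top}"
      hence xF: "\<And>d. d \<in> G \<Longrightarrow> sup d x = top" by auto
      define M where "M = (\<lambda>y. sup y x) ` F"
      have MF: "M \<subseteq> F" using up by (auto simp: M_def)
      have key: "\<And>b. Inf ((\<lambda>a. sup a b) ` M) \<le> sup x b"
      proof -
        fix b
        let ?t = "Inf ((\<lambda>a. sup a b) ` M)"
        have "\<forall>c. sup ?t c = top \<longrightarrow> sup (sup x b) c = top"
        proof (intro allI impI)
          fix c assume tc: "sup ?t c = top"
          have "sup x (sup b c) \<in> G"
            unfolding G_def
          proof (intro CollectI ballI)
            fix y assume "y \<in> F"
            hence "?t \<le> sup (sup y x) b" by (auto simp: M_def intro: Inf_lower)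
            hence "sup ?t c \<le> sup y (sup x (sup b c))"
              by (metis sup.mono order_refl sup_assoc)
            thus "sup y (sup x (sup b c)) = top" using tc by (simp add: top_unique)
          qed
          hence "sup (sup x (sup b c)) x = top" by (rule xF)
          thus "sup (sup x b) c = top" by (metis sup_assoc sup_commute sup_left_idem)
        qed
        thus "?t \<le> sup x b" using sf unfolding subfit_def by blast
      qed
      have lx: "x \<le> Inf M" by (auto simp: M_def intro: Inf_greatest)
      have "Inf M = Inf ((\<lambda>a. sup a bot) ` M)" by simp
      also have "\<dots> \<le> x" using key[of bot] by simp
      finally have eqx: "Inf M = x" using lx by simp
      have "exact_meet M"
        unfolding exact_meet_def
      proof
        fix b
        show "sup (Inf M) b = Inf ((\<lambda>a. sup a b) ` M)"
        proof (rule order.antisym)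
          show "sup (Inf M) b \<le> Inf ((\<lambda>a. sup a b) ` M)"
            by (rule INF_greatest, rule sup.mono, auto intro: Inf_lower)
          show "Inf ((\<lambda>a. sup a b) ` M) \<le> sup (Inf M) b" using key eqx by simp
        qed
      qed
      hence "Inf M \<in> F" using ex MF by (simp add: exact_filter_def)
      thus "x \<in> F" using eqx by simp
    qed
  qed
  thus ?thesis using lf lG by (auto simp: regular_filter_def)
qed

theorem mainTheorem10:
  shows "subfit TYPE('a::frame) \<longleftrightarrow> (Ex_filters :: 'a set set) \<subseteq> R_filters"
proof
  assume "subfit TYPE('a::frame)"
  thus "(Ex_filters :: 'a set set) \<subseteq> R_filters"
    using forward by (auto simp: Ex_filters_def R_filters_def)
next
  assume H: "(Ex_filters :: 'a set set) \<subseteq> R_filters"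
  show "subfit TYPE('a::frame)"
    unfolding subfit_def
  proof (intro allI impI)
    fix a b :: 'a
    assume ab: "\<forall>c. sup a c = top \<longrightarrow> sup b c = top"
    let ?F = "{x. a \<le> x}"
    have "lfilter ?F" by (auto simp: lfilter_def)
    moreover have "\<And>M. M \<subseteq> ?F \<Longrightarrow> Inf M \<in> ?F" by (auto intro: Inf_greatest)
    ultimately have "exact_filter ?F" by (simp add: exact_filter_def)
    hence "regular_filter ?F" using H by (auto simp: Ex_filters_def R_filters_def)
    then obtain G where G: "?F = {x. \<forall>g\<in>G. sup g x = top}"
      by (auto simp: regular_filter_def)
    have "a \<in> ?F" by simp
    hence "\<forall>g\<in>G. sup g a = top" using G by blast
    hence "\<forall>g\<in>G. sup g b = top" using ab by (metis sup_commute)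
    hence "b \<in> ?F" using G by blast
    thus "a \<le> b" by simp
  qed
qed

end
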